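(* (i) For every $\mathbb G$-stopping time $\hat\sigma$ with values in $[0,T]$ there exists an $\mathbb F$-stopping time $\sigma$ with values in $[0,T]$ such that $\hat X_{\hat\sigma}=\hat X_{\sigma\wedge\vartheta}=\hat X_\sigma$. (ii) For every $\mathbb F$-stopping time $\sigma$ with values in $[0,T]$ there exists an $\mathbb F^\sigma$-optional process $x(\sigma)$ such that $\hat X_\sigma=x_\vartheta(\sigma)$.
   Context: Let $(\Omega,\mathcal G,\mathbb P)$ be a probability space with a filtration $\mathbb F=(\mathcal F_t)$ satisfying the usual conditions, $\vartheta$ a strictly positive finite random time and $\mathbb G$ the progressive enlargement of $\mathbb F$ by $\vartheta$ (smallest right-continuous filtration containing $\mathbb F$ making $\vartheta$ a stopping time). Fix $T>0$. $P,R$ are bounded $\mathbb F$-optional processes and the payoff process is $\hat X=P\mathbb 1_{[\![0,\vartheta[\![}+R_\vartheta\mathbb 1_{[\![\vartheta,\infty[\![}$. For an $\mathbb F$-stopping time $\sigma$, $\mathbb F^\sigma=(\mathcal F_{\sigma\wedge t})_{t\ge0}$ is the stopped filtration, and $x_\vartheta(\sigma)$ denotes the process $x(\sigma)$ evaluated at time $\vartheta$. *)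

theory Defs
  imports "HOL-Probability.Probability"
begin

text \<open>Time is real and only t \<ge> 0 matters; filtrations are maps real \<Rightarrow> measure
  (only their sigma-algebras, i.e. sets, are used). Stopping times are the library's
  stopping_time (which for nonnegative times only constrains t \<ge> 0).\<close>

definition filtration_on :: "'a set \<Rightarrow> (real \<Rightarrow> 'a measure) \<Rightarrow> bool" where
  "filtration_on \<Omega> F \<longleftrightarrow> (\<forall>t\<ge>0. space (F t) = \<Omega>) \<and>
     (\<forall>s t. 0 \<le> s \<longrightarrow> s \<le> t \<longrightarrow> sets (F s) \<subseteq> sets (F t))"

definition right_continuous_filtration :: "(real \<Rightarrow> 'a measure) \<Rightarrow> bool" where
  "right_continuous_filtration F \<longleftrightarrow>
     (\<forall>t\<ge>0. sets (F t) = (\<Inter>s\<in>{t<..}. sets (F s)))"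

definition usual_conditions :: "'a measure \<Rightarrow> (real \<Rightarrow> 'a measure) \<Rightarrow> bool" where
  "usual_conditions M F \<longleftrightarrow> filtration_on (space M) F \<and>
     (\<forall>t\<ge>0. sets (F t) \<subseteq> sets M) \<and> right_continuous_filtration F \<and>
     (\<forall>N. N \<subseteq> space M \<longrightarrow> (\<exists>A\<in>null_sets M. N \<subseteq> A) \<longrightarrow> N \<in> sets (F 0))"

definition prog_enlargement ::
  "'a set \<Rightarrow> (real \<Rightarrow> 'a measure) \<Rightarrow> ('a \<Rightarrow> real) \<Rightarrow> real \<Rightarrow> 'a measure" where
  "prog_enlargement \<Omega> F \<theta> t = sigma \<Omega>
     (\<Inter>{sets (H t) | H. filtration_on \<Omega> H \<and> right_continuous_filtration H \<and>
          (\<forall>s\<ge>0. sets (F s) \<subseteq> sets (H s)) \<and> stopping_time H \<theta>})"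

definition optional_measure :: "'a set \<Rightarrow> (real \<Rightarrow> 'a measure) \<Rightarrow> (real \<times> 'a) measure" where
  "optional_measure \<Omega> F = sigma ({0..} \<times> \<Omega>)
     {{(t, \<omega>). 0 \<le> t \<and> \<omega> \<in> \<Omega> \<and> \<tau> \<omega> \<le> t} | \<tau>.
        stopping_time F \<tau> \<and> (\<forall>\<omega>\<in>\<Omega>. 0 \<le> \<tau> \<omega>)}"

definition optional_process :: "'a set \<Rightarrow> (real \<Rightarrow> 'a measure) \<Rightarrow> (real \<Rightarrow> 'a \<Rightarrow> real) \<Rightarrow> bool" where
  "optional_process \<Omega> F X \<longleftrightarrow> (\<lambda>p. X (fst p) (snd p)) \<in> borel_measurable (optional_measure \<Omega> F)"

definition bounded_process :: "'a set \<Rightarrow> (real \<Rightarrow> 'a \<Rightarrow> real) \<Rightarrow> bool" where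
  "bounded_process \<Omega> X \<longleftrightarrow> (\<exists>C. \<forall>t\<ge>0. \<forall>\<omega>\<in>\<Omega>. \<bar>X t \<omega>\<bar> \<le> C)"

definition stopped_sigma :: "'a set \<Rightarrow> (real \<Rightarrow> 'a measure) \<Rightarrow> ('a \<Rightarrow> real) \<Rightarrow> 'a measure" where
  "stopped_sigma \<Omega> F \<tau> = sigma \<Omega> {A. A \<subseteq> \<Omega> \<and> (\<forall>u\<ge>0. {\<omega>\<in>A. \<tau> \<omega> \<le> u} \<in> sets (F u))}"

definition stopped_filtration :: "'a set \<Rightarrow> (real \<Rightarrow> 'a measure) \<Rightarrow> ('a \<Rightarrow> real) \<Rightarrow> real \<Rightarrow> 'a measure" where
  "stopped_filtration \<Omega> F \<sigma> t = stopped_sigma \<Omega> F (\<lambda>\<omega>. min (\<sigma> \<omega>) t)"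

text \<open>Payoff process Xhat = P 1_[[0,\<theta>[[ + R_\<theta> 1_[[\<theta>,\<infinity>[[.\<close>
definition payoff :: "(real \<Rightarrow> 'a \<Rightarrow> real) \<Rightarrow> (real \<Rightarrow> 'a \<Rightarrow> real) \<Rightarrow> ('a \<Rightarrow> real) \<Rightarrow> real \<Rightarrow> 'a \<Rightarrow> real" where
  "payoff P R \<theta> t \<omega> = (if t < \<theta> \<omega> then P t \<omega> else R (\<theta> \<omega>) \<omega>)"

end

theory Submission
  imports Defs
begin


lemma filt_space: "filtration_on \<Omega> F \<Longrightarrow> 0 \<le> t \<Longrightarrow> space (F t) = \<Omega>"
  by (simp add: filtration_on_def)

lemma filt_mono: "filtration_on \<Omega> F \<Longrightarrow> 0 \<le> s \<Longrightarrow> s \<le> t \<Longrightarrow> A \<in> sets (F s) \<Longrightarrow> A \<in> sets (F t)"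
  unfolding filtration_on_def by blast

lemma st_set: "filtration_on \<Omega> F \<Longrightarrow> stopping_time F \<sigma> \<Longrightarrow> 0 \<le> t \<Longrightarrow>
   {\<omega>\<in>\<Omega>. \<sigma> \<omega> \<le> t} \<in> sets (F t)"
  using stopping_timeD[of F \<sigma> t] by (simp add: pred_def filt_space)

lemma st_set_gt: "filtration_on \<Omega> F \<Longrightarrow> stopping_time F \<sigma> \<Longrightarrow> 0 \<le> t \<Longrightarrow>
   {\<omega>\<in>\<Omega>. t < \<sigma> \<omega>} \<in> sets (F t)"
proof -
  assume a: "filtration_on \<Omega> F" "stopping_time F \<sigma>" "0 \<le> t"
  have "{\<omega>\<in>\<Omega>. t < \<sigma> \<omega>} = space (F t) - {\<omega>\<in>\<Omega>. \<sigma> \<omega> \<le> t}"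
    using a by (auto simp: filt_space)
  then show ?thesis using st_set[OF a] by auto
qed

lemma st_set_le: "filtration_on \<Omega> F \<Longrightarrow> stopping_time F \<sigma> \<Longrightarrow> 0 \<le> t \<Longrightarrow> t \<le> u \<Longrightarrow>
   {\<omega>\<in>\<Omega>. \<sigma> \<omega> \<le> t} \<in> sets (F u)"
  using st_set filt_mono by blast

lemma st_compare:
  assumes F: "filtration_on \<Omega> F" and s: "stopping_time F \<sigma>" and r: "stopping_time F \<tau>"
    and pos: "\<forall>\<omega>\<in>\<Omega>. 0 \<le> \<sigma> \<omega>" and t: "0 \<le> t"
  shows "{\<omega>\<in>\<Omega>. \<sigma> \<omega> < \<tau> \<omega> \<and> \<sigma> \<omega> \<le> t} \<in> sets (F t)"
proof -
  let ?I = "(\<rat> \<inter> {0..t}) \<union> {t}"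
  have eq: "{\<omega>\<in>\<Omega>. \<sigma> \<omega> < \<tau> \<omega> \<and> \<sigma> \<omega> \<le> t} =
     (\<Union>q\<in>?I. {\<omega>\<in>\<Omega>. \<sigma> \<omega> \<le> q} \<inter> {\<omega>\<in>\<Omega>. q < \<tau> \<omega>})"
  proof (rule set_eqI, rule iffI)
    fix \<omega> assume "\<omega> \<in> {\<omega>\<in>\<Omega>. \<sigma> \<omega> < \<tau> \<omega> \<and> \<sigma> \<omega> \<le> t}"
    then have w: "\<omega> \<in> \<Omega>" "\<sigma> \<omega> < \<tau> \<omega>" "\<sigma> \<omega> \<le> t" by auto
    show "\<omega> \<in> (\<Union>q\<in>?I. {\<omega>\<in>\<Omega>. \<sigma> \<omega> \<le> q} \<inter> {\<omega>\<in>\<Omega>. q < \<tau> \<omega>})"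
    proof (cases "t < \<tau> \<omega>")
      case True then show ?thesis using w by auto
    next
      case False
      obtain q where q: "q \<in> \<rat>" "\<sigma> \<omega> < q" "q < \<tau> \<omega>" using Rats_dense_in_real w(2) by blast
      have "0 \<le> q" using pos w q by force
      then have "q \<in> ?I" using w q False by auto
      then show ?thesis using w q by auto
    qed
  qed auto
  show ?thesis unfolding eq
  proof (intro sets.countable_UN')
    show "countable ?I" using countable_rat by auto
    show "(\<lambda>q. {\<omega>\<in>\<Omega>. \<sigma> \<omega> \<le> q} \<inter> {\<omega>\<in>\<Omega>. q < \<tau> \<omega>}) ` ?I \<subseteq> sets (F t)"
    proof clarify
      fix q assume "q \<in> ?I"
      then have q: "0 \<le> q" "q \<le> t" using t by auto
      have "{\<omega>\<in>\<Omega>. \<sigma> \<omega> \<le> q} \<inter> {\<omega>\<in>\<Omega>. q < \<tau> \<omega>} \<in> sets (F q)"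
        using st_set[OF F s q(1)] st_set_gt[OF F r q(1)] by auto
      then show "{\<omega>\<in>\<Omega>. \<sigma> \<omega> \<le> q} \<inter> {\<omega>\<in>\<Omega>. q < \<tau> \<omega>} \<in> sets (F t)"
        using filt_mono[OF F q] by blast
    qed
  qed
qed

lemma sf_space: "space (stopped_filtration \<Omega> F \<sigma> t) = \<Omega>"
  unfolding stopped_filtration_def stopped_sigma_def by (simp add: space_measure_of_conv)

lemma sf_intro:
  assumes "A \<subseteq> \<Omega>" "\<And>u. 0 \<le> u \<Longrightarrow> {\<omega>\<in>A. min (\<sigma> \<omega>) t \<le> u} \<in> sets (F u)"
  shows "A \<in> sets (stopped_filtration \<Omega> F \<sigma> t)"
  unfolding stopped_filtration_def stopped_sigma_def
  by (subst sets_measure_of) (use assms in \<open>auto intro!: sigma_sets.Basic\<close>)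

lemma opt_space: "space (optional_measure \<Omega> F) = {0..} \<times> \<Omega>"
  unfolding optional_measure_def by (simp add: space_measure_of_conv)

lemma opt_gen:
  assumes "stopping_time F \<rho>" "\<forall>\<omega>\<in>\<Omega>. 0 \<le> \<rho> \<omega>"
  shows "{(t,\<omega>). 0 \<le> t \<and> \<omega> \<in> \<Omega> \<and> \<rho> \<omega> \<le> t} \<in> sets (optional_measure \<Omega> F)"
  unfolding optional_measure_def
  by (subst sets_measure_of) (use assms in \<open>auto intro!: sigma_sets.Basic\<close>)

lemma sf_st:
  assumes pos: "\<forall>\<omega>\<in>\<Omega>. 0 \<le> \<rho> \<omega>"
    and H: "\<And>t u. 0 \<le> t \<Longrightarrow> 0 \<le> u \<Longrightarrow> {\<omega>\<in>\<Omega>. \<rho> \<omega> \<le> t \<and> min (\<sigma> \<omega>) t \<le> u} \<in> sets (F u)"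
  shows "stopping_time (stopped_filtration \<Omega> F \<sigma>) \<rho>"
proof (rule stopping_timeI)
  fix t :: real
  show "Measurable.pred (stopped_filtration \<Omega> F \<sigma> t) (\<lambda>x. \<rho> x \<le> t)"
    unfolding pred_def sf_space
  proof (cases "t < 0")
    case True
    then have "{x \<in> \<Omega>. \<rho> x \<le> t} = {}" using pos by force
    then show "{x \<in> \<Omega>. \<rho> x \<le> t} \<in> sets (stopped_filtration \<Omega> F \<sigma> t)" by (metis sets.empty_sets)
  next
    case False
    show "{x \<in> \<Omega>. \<rho> x \<le> t} \<in> sets (stopped_filtration \<Omega> F \<sigma> t)"
    proof (rule sf_intro)
      fix u :: real assume "0 \<le> u"
      have "{\<omega> \<in> {x \<in> \<Omega>. \<rho> x \<le> t}. min (\<sigma> \<omega>) t \<le> u} = {\<omega>\<in>\<Omega>. \<rho> \<omega> \<le> t \<and> min (\<sigma> \<omega>) t \<le> u}"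
        by auto
      then show "{\<omega> \<in> {x \<in> \<Omega>. \<rho> x \<le> t}. min (\<sigma> \<omega>) t \<le> u} \<in> sets (F u)"
        using H[of t u] False \<open>0 \<le> u\<close> by simp
    qed auto
  qed
qed

context
  fixes \<Omega> F \<sigma> and T :: real
  assumes F: "filtration_on \<Omega> F" and s: "stopping_time F \<sigma>"
    and sb: "\<forall>\<omega>\<in>\<Omega>. 0 \<le> \<sigma> \<omega> \<and> \<sigma> \<omega> \<le> T" and T: "0 \<le> T"
begin

lemma st_shift:
  assumes e: "0 < e"
  shows "stopping_time (stopped_filtration \<Omega> F \<sigma>) (\<lambda>\<omega>. \<sigma> \<omega> + e)"
proof (rule sf_st)
  show "\<forall>\<omega>\<in>\<Omega>. 0 \<le> \<sigma> \<omega> + e" using sb e by auto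
  fix t u :: real assume tu: "0 \<le> t" "0 \<le> u"
  have eq: "{\<omega>\<in>\<Omega>. \<sigma> \<omega> + e \<le> t \<and> min (\<sigma> \<omega>) t \<le> u} = {\<omega>\<in>\<Omega>. \<sigma> \<omega> \<le> min (t - e) u}"
    using e by auto
  show "{\<omega>\<in>\<Omega>. \<sigma> \<omega> + e \<le> t \<and> min (\<sigma> \<omega>) t \<le> u} \<in> sets (F u)"
  proof (cases "min (t - e) u < 0")
    case True
    then have "{\<omega>\<in>\<Omega>. \<sigma> \<omega> \<le> min (t - e) u} = {}" using sb by force
    then show ?thesis using eq by (metis sets.empty_sets)
  next
    case False
    then show ?thesis unfolding eq by (intro st_set_le[OF F s]) auto
  qed
qed

lemma st_cut:
  assumes r: "stopping_time F \<tau>" and rp: "\<forall>\<omega>\<in>\<Omega>. 0 \<le> \<tau> \<omega>"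
  shows "stopping_time (stopped_filtration \<Omega> F \<sigma>) (\<lambda>\<omega>. if \<tau> \<omega> \<le> \<sigma> \<omega> then \<tau> \<omega> else T + 1 + real n)"
proof (rule sf_st)
  show "\<forall>\<omega>\<in>\<Omega>. 0 \<le> (if \<tau> \<omega> \<le> \<sigma> \<omega> then \<tau> \<omega> else T + 1 + real n)" using rp T by auto
  fix t u :: real assume tu: "0 \<le> t" "0 \<le> u"
  define E where "E s = {\<omega>\<in>\<Omega>. \<sigma> \<omega> < \<tau> \<omega> \<and> \<sigma> \<omega> \<le> s}" for s
  have E: "0 \<le> s \<Longrightarrow> E s \<in> sets (F s)" for s
    unfolding E_def using st_compare[OF F s r] sb by auto
  show "{\<omega>\<in>\<Omega>. (if \<tau> \<omega> \<le> \<sigma> \<omega> then \<tau> \<omega> else T + 1 + real n) \<le> t \<and> min (\<sigma> \<omega>) t \<le> u} \<in> sets (F u)"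
  proof (cases "t \<le> u")
    case True
    note cc = True
    have "{\<omega>\<in>\<Omega>. (if \<tau> \<omega> \<le> \<sigma> \<omega> then \<tau> \<omega> else T + 1 + real n) \<le> t \<and> min (\<sigma> \<omega>) t \<le> u}
       = ({\<omega>\<in>\<Omega>. \<tau> \<omega> \<le> t} - E t) \<union> (if T + 1 + real n \<le> t then E t else {})"
      (is "?L = ?R")
    proof (rule set_eqI)
      fix w show "w \<in> ?L \<longleftrightarrow> w \<in> ?R"
      proof (cases "w \<in> \<Omega>")
        case w: True
        then have "0 \<le> \<sigma> w" "\<sigma> w \<le> T" using sb by auto
        then show ?thesis using w cc tu by (auto simp: E_def)
      qed (simp add: E_def)
    qed
    moreover have "({\<omega>\<in>\<Omega>. \<tau> \<omega> \<le> t} - E t) \<union> (if T + 1 + real n \<le> t then E t else {}) \<in> sets (F t)"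
      using E[OF tu(1)] st_set[OF F r tu(1)] by auto
    ultimately show ?thesis using filt_mono[OF F tu(1) True] by metis
  next
    case False
    note cc = False
    have "{\<omega>\<in>\<Omega>. (if \<tau> \<omega> \<le> \<sigma> \<omega> then \<tau> \<omega> else T + 1 + real n) \<le> t \<and> min (\<sigma> \<omega>) t \<le> u}
       = ({\<omega>\<in>\<Omega>. \<sigma> \<omega> \<le> u} - E u) \<union> (if T + 1 + real n \<le> t then E u else {})"
      (is "?L = ?R")
    proof (rule set_eqI)
      fix w show "w \<in> ?L \<longleftrightarrow> w \<in> ?R"
      proof (cases "w \<in> \<Omega>")
        case w: True
        then have "0 \<le> \<sigma> w" "\<sigma> w \<le> T" using sb by auto
        then show ?thesis using w cc tu by (auto simp: E_def)
      qed (simp add: E_def)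
    qed
    moreover have "({\<omega>\<in>\<Omega>. \<sigma> \<omega> \<le> u} - E u) \<union> (if T + 1 + real n \<le> t then E u else {}) \<in> sets (F u)"
      using E[OF tu(2)] st_set[OF F s tu(2)] by auto
    ultimately show ?thesis by metis
  qed
qed

lemma phi_meas:
  "(\<lambda>p. (min (fst p) (\<sigma> (snd p)), snd p)) \<in> measurable (optional_measure \<Omega> (stopped_filtration \<Omega> F \<sigma>)) (optional_measure \<Omega> F)"
  unfolding optional_measure_def[of \<Omega> F]
proof (rule measurable_measure_of)
  let ?M = "optional_measure \<Omega> (stopped_filtration \<Omega> F \<sigma>)"
  show "(\<lambda>p. (min (fst p) (\<sigma> (snd p)), snd p)) \<in> space ?M \<rightarrow> {0..} \<times> \<Omega>"
    using sb by (auto simp: opt_space)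
  fix y assume "y \<in> {{(t, \<omega>). 0 \<le> t \<and> \<omega> \<in> \<Omega> \<and> \<tau> \<omega> \<le> t} |\<tau>. stopping_time F \<tau> \<and> (\<forall>\<omega>\<in>\<Omega>. 0 \<le> \<tau> \<omega>)}"
  then obtain \<tau> where y: "y = {(t, \<omega>). 0 \<le> t \<and> \<omega> \<in> \<Omega> \<and> \<tau> \<omega> \<le> t}"
    and r: "stopping_time F \<tau>" and rp: "\<forall>\<omega>\<in>\<Omega>. 0 \<le> \<tau> \<omega>" by blast
  define G where "G n = {(t, \<omega>). 0 \<le> t \<and> \<omega> \<in> \<Omega> \<and> (if \<tau> \<omega> \<le> \<sigma> \<omega> then \<tau> \<omega> else T + 1 + real n) \<le> t}" for n
  define K where "K n = {(t, \<omega>). 0 \<le> t \<and> \<omega> \<in> \<Omega> \<and> (\<lambda>_. T + 1 + real n) \<omega> \<le> t}" for n :: nat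
  have G: "G n \<in> sets ?M" for n
    unfolding G_def by (rule opt_gen[OF st_cut[OF r rp]]) (use rp T in auto)
  have K: "K n \<in> sets ?M" for n
    unfolding K_def by (rule opt_gen[OF stopping_time_const]) (use T in auto)
  have eq: "(\<lambda>p. (min (fst p) (\<sigma> (snd p)), snd p)) -` y \<inter> space ?M = (\<Union>n. G n \<inter> (space ?M - K n))"
  proof (rule set_eqI, rule iffI)
    fix p assume "p \<in> (\<lambda>p. (min (fst p) (\<sigma> (snd p)), snd p)) -` y \<inter> space ?M"
    then obtain t \<omega> where p: "p = (t, \<omega>)" "0 \<le> t" "\<omega> \<in> \<Omega>" "\<tau> \<omega> \<le> t" "\<tau> \<omega> \<le> \<sigma> \<omega>"
      using y by (auto simp: opt_space)
    obtain n where n: "t - T < real n" using reals_Archimedean2 by blast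
    have "p \<in> G n \<inter> (space ?M - K n)" using p n by (auto simp: G_def K_def opt_space)
    then show "p \<in> (\<Union>n. G n \<inter> (space ?M - K n))" by blast
  next
    fix p assume "p \<in> (\<Union>n. G n \<inter> (space ?M - K n))"
    then show "p \<in> (\<lambda>p. (min (fst p) (\<sigma> (snd p)), snd p)) -` y \<inter> space ?M"
      using y sb by (auto simp: G_def K_def opt_space split: if_splits)
  qed
  show "(\<lambda>p. (min (fst p) (\<sigma> (snd p)), snd p)) -` y \<inter> space ?M \<in> sets ?M"
    unfolding eq using G K by (intro sets.countable_UN) auto
qed auto

lemma strict_set:
  "{(t, \<omega>). 0 \<le> t \<and> \<omega> \<in> \<Omega> \<and> \<sigma> \<omega> < t} \<in> sets (optional_measure \<Omega> (stopped_filtration \<Omega> F \<sigma>))"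
proof -
  let ?M = "optional_measure \<Omega> (stopped_filtration \<Omega> F \<sigma>)"
  define G where "G n = {(t, \<omega>). 0 \<le> t \<and> \<omega> \<in> \<Omega> \<and> (\<lambda>\<omega>. \<sigma> \<omega> + 1 / (real n + 1)) \<omega> \<le> t}" for n :: nat
  have G: "G n \<in> sets ?M" for n
    unfolding G_def by (rule opt_gen[OF st_shift]) (use sb in auto)
  have eq: "{(t, \<omega>). 0 \<le> t \<and> \<omega> \<in> \<Omega> \<and> \<sigma> \<omega> < t} = (\<Union>n. G n)"
  proof (rule set_eqI, rule iffI)
    fix p assume "p \<in> {(t, \<omega>). 0 \<le> t \<and> \<omega> \<in> \<Omega> \<and> \<sigma> \<omega> < t}"
    then obtain t \<omega> where p: "p = (t, \<omega>)" "0 \<le> t" "\<omega> \<in> \<Omega>" "\<sigma> \<omega> < t" by auto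
    obtain n where n: "1 / (t - \<sigma> \<omega>) < real n" using reals_Archimedean2 by blast
    have "1 / (real n + 1) \<le> t - \<sigma> \<omega>"
    proof -
      have "0 < t - \<sigma> \<omega>" using p by auto
      then have "1 < (real n + 1) * (t - \<sigma> \<omega>)" using n by (simp add: field_simps)
      then show ?thesis by (simp add: field_simps)
    qed
    then have "p \<in> G n" using p by (auto simp: G_def)
    then show "p \<in> (\<Union>n. G n)" by blast
  next
    fix p assume "p \<in> (\<Union>n. G n)"
    then obtain n where "p \<in> G n" by blast
    moreover have h: "\<sigma> w + 1 / (real n + 1) \<le> t \<Longrightarrow> \<sigma> w < t" for w t
      by (smt (verit) divide_pos_pos of_nat_0_le_iff)
    ultimately show "p \<in> {(t, \<omega>). 0 \<le> t \<and> \<omega> \<in> \<Omega> \<and> \<sigma> \<omega> < t}"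
      unfolding G_def by (auto dest: h)
  qed
  show ?thesis unfolding eq using G by (intro sets.countable_UN) auto
qed

lemma part2:
  assumes P: "optional_process \<Omega> F P" and R: "optional_process \<Omega> F R"
  shows "\<exists>x. optional_process \<Omega> (stopped_filtration \<Omega> F \<sigma>) x \<and>
           (\<forall>\<omega>\<in>\<Omega>. payoff P R \<theta> (\<sigma> \<omega>) \<omega> = x (\<theta> \<omega>) \<omega>)"
proof -
  let ?M = "optional_measure \<Omega> (stopped_filtration \<Omega> F \<sigma>)"
  let ?S = "{(t, \<omega>). 0 \<le> t \<and> \<omega> \<in> \<Omega> \<and> \<sigma> \<omega> < t}"
  let ?phi = "\<lambda>p. (min (fst p) (\<sigma> (snd p)), snd p)"
  define x where "x t \<omega> = (if (t, \<omega>) \<in> ?S then P (min t (\<sigma> \<omega>)) \<omega> else R (min t (\<sigma> \<omega>)) \<omega>)" for t \<omega>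
  have P': "(\<lambda>p. P (fst p) (snd p)) \<in> borel_measurable (optional_measure \<Omega> F)"
    using P by (simp add: optional_process_def)
  have R': "(\<lambda>p. R (fst p) (snd p)) \<in> borel_measurable (optional_measure \<Omega> F)"
    using R by (simp add: optional_process_def)
  have "(\<lambda>p. if p \<in> ?S then (\<lambda>p. P (fst p) (snd p)) (?phi p) else (\<lambda>p. R (fst p) (snd p)) (?phi p))
      \<in> borel_measurable ?M"
  proof (rule measurable_If_set)
    show "(\<lambda>p. (\<lambda>p. P (fst p) (snd p)) (?phi p)) \<in> borel_measurable ?M"
      by (rule measurable_comp[OF phi_meas P', unfolded comp_def])
    show "(\<lambda>p. (\<lambda>p. R (fst p) (snd p)) (?phi p)) \<in> borel_measurable ?M"
      by (rule measurable_comp[OF phi_meas R', unfolded comp_def])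
    show "?S \<inter> space ?M \<in> sets ?M" using strict_set by (simp add: opt_space Int_absorb2 subset_eq)
  qed
  then have "optional_process \<Omega> (stopped_filtration \<Omega> F \<sigma>) x"
    unfolding optional_process_def x_def by (simp only: fst_conv snd_conv prod.collapse)
  moreover have "\<forall>\<omega>\<in>\<Omega>. payoff P R \<theta> (\<sigma> \<omega>) \<omega> = x (\<theta> \<omega>) \<omega>"
  proof
    fix \<omega> assume w: "\<omega> \<in> \<Omega>"
    then have "0 \<le> \<sigma> \<omega>" using sb by auto
    then show "payoff P R \<theta> (\<sigma> \<omega>) \<omega> = x (\<theta> \<omega>) \<omega>"
      using w by (auto simp: payoff_def x_def min_def)
  qed
  ultimately show ?thesis by blast
qed

end







definition trace_sets :: "'a set \<Rightarrow> (real \<Rightarrow> 'a measure) \<Rightarrow> ('a \<Rightarrow> real) \<Rightarrow> real \<Rightarrow> 'a set set" where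
  "trace_sets \<Omega> F \<theta> t = {A. A \<subseteq> \<Omega> \<and> (\<exists>A'\<in>sets (F t). A \<inter> {\<omega>\<in>\<Omega>. t < \<theta> \<omega>} = A' \<inter> {\<omega>\<in>\<Omega>. t < \<theta> \<omega>})}"

lemma int_eq_iff: "A \<inter> S = B \<inter> S \<longleftrightarrow> (\<forall>x\<in>S. x \<in> A \<longleftrightarrow> x \<in> B)"
  by blast

lemma trace_setsI:
  "A \<subseteq> \<Omega> \<Longrightarrow> A' \<in> sets (F t) \<Longrightarrow> (\<forall>x\<in>{\<omega>\<in>\<Omega>. t < \<theta> \<omega>}. x \<in> A \<longleftrightarrow> x \<in> A') \<Longrightarrow> A \<in> trace_sets \<Omega> F \<theta> t"
  unfolding trace_sets_def int_eq_iff by blast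

lemma trace_setsE:
  assumes "A \<in> trace_sets \<Omega> F \<theta> t"
  obtains A' where "A \<subseteq> \<Omega>" "A' \<in> sets (F t)" "\<forall>x\<in>{\<omega>\<in>\<Omega>. t < \<theta> \<omega>}. x \<in> A \<longleftrightarrow> x \<in> A'"
  using assms unfolding trace_sets_def int_eq_iff by blast

lemma trace_sigma:
  assumes F: "filtration_on \<Omega> F" and t: "0 \<le> t"
  shows "sigma_algebra \<Omega> (trace_sets \<Omega> F \<theta> t)"
  unfolding sigma_algebra_iff2
proof (intro conjI ballI allI impI)
  let ?Th = "{\<omega>\<in>\<Omega>. t < \<theta> \<omega>}"
  have sp: "space (F t) = \<Omega>" using filt_space[OF F t] .
  show "trace_sets \<Omega> F \<theta> t \<subseteq> Pow \<Omega>" unfolding trace_sets_def by blast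
  show "{} \<in> trace_sets \<Omega> F \<theta> t" by (rule trace_setsI[where A'="{}"]) auto
  fix A assume "A \<in> trace_sets \<Omega> F \<theta> t"
  then obtain A' where A': "A' \<in> sets (F t)" "\<forall>x\<in>?Th. x \<in> A \<longleftrightarrow> x \<in> A'" by (rule trace_setsE)
  have c: "\<Omega> - A' \<in> sets (F t)" using A' sp by (metis sets.compl_sets)
  show "\<Omega> - A \<in> trace_sets \<Omega> F \<theta> t"
    by (rule trace_setsI[where A'="\<Omega> - A'"]) (use A'(2) c in auto)
next
  let ?Th = "{\<omega>\<in>\<Omega>. t < \<theta> \<omega>}"
  fix A :: "nat \<Rightarrow> 'a set" assume r: "range A \<subseteq> trace_sets \<Omega> F \<theta> t"
  have mem: "A i \<in> trace_sets \<Omega> F \<theta> t" for i using r by auto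
  have ex: "\<exists>A'. A' \<in> sets (F t) \<and> (\<forall>x\<in>?Th. x \<in> A i \<longleftrightarrow> x \<in> A')" for i
  proof -
    from mem[of i] obtain B where "B \<in> sets (F t)" "\<forall>x\<in>?Th. x \<in> A i \<longleftrightarrow> x \<in> B"
      by (rule trace_setsE)
    then show ?thesis by blast
  qed
  have sub: "A i \<subseteq> \<Omega>" for i using mem[of i] by (rule trace_setsE)
  from ex obtain A' where A': "\<And>i. A' i \<in> sets (F t)" "\<And>i. \<forall>x\<in>?Th. x \<in> A i \<longleftrightarrow> x \<in> A' i" by metis
  have c: "(\<Union>i. A' i) \<in> sets (F t)" using A'(1) by (intro sets.countable_UN) auto
  show "(\<Union>i. A i) \<in> trace_sets \<Omega> F \<theta> t"
    by (rule trace_setsI[where A'="\<Union>i. A' i"]) (use A'(2) sub c in blast)+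
qed

lemma trace_mono:
  assumes F: "filtration_on \<Omega> F" and st: "0 \<le> s" "s \<le> t" and A: "A \<in> trace_sets \<Omega> F \<theta> s"
  shows "A \<in> trace_sets \<Omega> F \<theta> t"
proof -
  obtain A' where A': "A \<subseteq> \<Omega>" "A' \<in> sets (F s)" "\<forall>x\<in>{\<omega>\<in>\<Omega>. s < \<theta> \<omega>}. x \<in> A \<longleftrightarrow> x \<in> A'"
    using A by (rule trace_setsE)
  have c: "A' \<in> sets (F t)" using filt_mono[OF F st A'(2)] .
  have "\<forall>x\<in>{\<omega>\<in>\<Omega>. t < \<theta> \<omega>}. x \<in> A \<longleftrightarrow> x \<in> A'"
  proof
    fix x assume "x \<in> {\<omega>\<in>\<Omega>. t < \<theta> \<omega>}"
    then have "x \<in> {\<omega>\<in>\<Omega>. s < \<theta> \<omega>}" using st by auto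
    then show "x \<in> A \<longleftrightarrow> x \<in> A'" using A'(3) by blast
  qed
  then show ?thesis by (rule trace_setsI[where F=F and t=t and \<theta>=\<theta> and \<Omega>=\<Omega>, OF A'(1) c])
qed

lemma trace_rc:
  assumes F: "filtration_on \<Omega> F" and rc: "right_continuous_filtration F" and t: "0 \<le> t"
    and A: "\<And>s. t < s \<Longrightarrow> A \<in> trace_sets \<Omega> F \<theta> s"
  shows "A \<in> trace_sets \<Omega> F \<theta> t"
proof -
  let ?e = "\<lambda>n::nat. t + 1 / (real n + 1)"
  have "\<exists>A'. A' \<in> sets (F (?e n)) \<and> (\<forall>x\<in>{\<omega>\<in>\<Omega>. ?e n < \<theta> \<omega>}. x \<in> A \<longleftrightarrow> x \<in> A')" for n
  proof -
    have "t < ?e n" by simp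
    from A[OF this] obtain A'' where "A'' \<in> sets (F (?e n))"
      "\<forall>x\<in>{\<omega>\<in>\<Omega>. ?e n < \<theta> \<omega>}. x \<in> A \<longleftrightarrow> x \<in> A''"
      by (rule trace_setsE)
    then show ?thesis by blast
  qed
  then obtain A' where A': "\<And>n. A' n \<in> sets (F (?e n))"
    "\<And>n. \<forall>x\<in>{\<omega>\<in>\<Omega>. ?e n < \<theta> \<omega>}. x \<in> A \<longleftrightarrow> x \<in> A' n" by metis
  have "A \<in> trace_sets \<Omega> F \<theta> (t+1)" using A[of "t+1"] by simp
  then have sub: "A \<subseteq> \<Omega>" by (rule trace_setsE)
  define L where "L = (\<Union>m. \<Inter>n. A' (n + m))"
  have L: "L \<in> sets (F t)"
  proof -
    have Ls: "L \<in> sets (F s)" if s: "t < s" for s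
    proof -
      obtain m0 :: nat where m0: "1 / (s - t) < real m0" using reals_Archimedean2 by blast
      have e_le: "?e n < s" if "m0 \<le> n" for n
      proof -
        have "0 < s - t" using s by simp
        then have "1 < real m0 * (s - t)" using m0 by (simp add: field_simps)
        also have "\<dots> \<le> (real n + 1) * (s - t)" using that \<open>0 < s - t\<close>
          by (intro mult_right_mono) auto
        finally have "1 / (real n + 1) < s - t" by (simp add: field_simps)
        then show ?thesis by simp
      qed
      have inF: "A' n \<in> sets (F s)" if "m0 \<le> n" for n
      proof -
        have "0 \<le> ?e n" using t by (simp add: add_nonneg_nonneg)
        then show ?thesis using filt_mono[OF F _ less_imp_le[OF e_le[OF that]] A'(1)[of n]] by simp
      qed
      have eqL: "L = (\<Union>m. \<Inter>n. A' (n + (m + m0)))"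
      proof
        show "L \<subseteq> (\<Union>m. \<Inter>n. A' (n + (m + m0)))"
          unfolding L_def
        proof (rule subsetI)
          fix x assume "x \<in> (\<Union>m. \<Inter>n. A' (n + m))"
          then obtain m where "\<forall>n. x \<in> A' (n + m)" by blast
          then have "\<forall>n. x \<in> A' (n + (m + m0))" by (metis add.assoc add.commute)
          then show "x \<in> (\<Union>m. \<Inter>n. A' (n + (m + m0)))" by blast
        qed
        show "(\<Union>m. \<Inter>n. A' (n + (m + m0))) \<subseteq> L"
          unfolding L_def by blast
      qed
      show ?thesis unfolding eqL
        by (intro sets.countable_UN sets.countable_INT) (auto intro!: inF)
    qed
    have rcx: "sets (F t) = (\<Inter>s\<in>{t<..}. sets (F s))"
      using rc t unfolding right_continuous_filtration_def by blast
    have "L \<in> (\<Inter>s\<in>{t<..}. sets (F s))" using Ls by blast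
    then show ?thesis using rcx by simp
  qed
  have "\<forall>\<omega>\<in>{\<omega>\<in>\<Omega>. t < \<theta> \<omega>}. \<omega> \<in> A \<longleftrightarrow> \<omega> \<in> L"
  proof
    fix \<omega> assume w: "\<omega> \<in> {\<omega>\<in>\<Omega>. t < \<theta> \<omega>}"
    obtain N :: nat where N: "1 / (\<theta> \<omega> - t) < real N" using reals_Archimedean2 by blast
    have big: "\<omega> \<in> A \<longleftrightarrow> \<omega> \<in> A' n" if "N \<le> n" for n
    proof -
      have "0 < \<theta> \<omega> - t" using w by simp
      then have "1 < real N * (\<theta> \<omega> - t)" using N by (simp add: field_simps)
      also have "\<dots> \<le> (real n + 1) * (\<theta> \<omega> - t)" using that \<open>0 < \<theta> \<omega> - t\<close>
        by (intro mult_right_mono) auto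
      finally have "1 / (real n + 1) < \<theta> \<omega> - t" by (simp add: field_simps)
      then have "\<omega> \<in> {\<omega>\<in>\<Omega>. ?e n < \<theta> \<omega>}" using w by simp
      then show ?thesis using A'(2)[of n] by blast
    qed
    show "\<omega> \<in> A \<longleftrightarrow> \<omega> \<in> L"
    proof
      assume "\<omega> \<in> A"
      then have "\<forall>n. \<omega> \<in> A' (n + N)" using big by simp
      then show "\<omega> \<in> L" unfolding L_def by blast
    next
      assume "\<omega> \<in> L"
      then obtain m where "\<forall>n. \<omega> \<in> A' (n + m)" unfolding L_def by blast
      then have "\<omega> \<in> A' (N + m)" by blast
      then show "\<omega> \<in> A" using big[of "N + m"] by simp
    qed
  qed
  then show ?thesis by (rule trace_setsI[where F=F and t=t and \<theta>=\<theta> and \<Omega>=\<Omega>, OF sub L])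
qed


lemma G_sub:
  assumes F: "filtration_on \<Omega> F" and rc: "right_continuous_filtration F"
    and pos: "\<forall>\<omega>\<in>\<Omega>. 0 < \<theta> \<omega>" and t: "0 \<le> t"
  shows "sets (prog_enlargement \<Omega> F \<theta> t) \<subseteq> trace_sets \<Omega> F \<theta> t"
proof -
  define H where "H = (\<lambda>t. sigma \<Omega> (trace_sets \<Omega> F \<theta> t))"
  have Pw: "trace_sets \<Omega> F \<theta> t \<subseteq> Pow \<Omega>" for t unfolding trace_sets_def by blast
  have sH: "sets (H t) = trace_sets \<Omega> F \<theta> t" if "0 \<le> t" for t
    unfolding H_def using sets_measure_of[OF Pw] sigma_algebra.sigma_sets_eq[OF trace_sigma[OF F that]]
    by simp
  have spH: "space (H t) = \<Omega>" for t unfolding H_def by (simp add: space_measure_of_conv)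
  have filt: "filtration_on \<Omega> H"
    unfolding filtration_on_def
  proof (intro conjI allI impI)
    fix s t :: real assume "0 \<le> s" "s \<le> t"
    note st = this
    show "sets (H s) \<subseteq> sets (H t)"
    proof (rule subsetI)
      fix A assume "A \<in> sets (H s)"
      then have "A \<in> trace_sets \<Omega> F \<theta> s" using sH[OF st(1)] by simp
      then have "A \<in> trace_sets \<Omega> F \<theta> t" by (rule trace_mono[OF F st])
      then show "A \<in> sets (H t)" using sH[of t] st by simp
    qed
  qed (simp add: spH)
  have rcH: "right_continuous_filtration H"
    unfolding right_continuous_filtration_def
  proof (intro allI impI)
    fix t :: real assume t: "0 \<le> t"
    have eq: "(\<Inter>s\<in>{t<..}. sets (H s)) = (\<Inter>s\<in>{t<..}. trace_sets \<Omega> F \<theta> s)"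
      using t sH by (intro INF_cong) auto
    show "sets (H t) = (\<Inter>s\<in>{t<..}. sets (H s))"
      unfolding eq sH[OF t]
    proof
      show "trace_sets \<Omega> F \<theta> t \<subseteq> (\<Inter>s\<in>{t<..}. trace_sets \<Omega> F \<theta> s)"
      proof (rule subsetI)
        fix A assume A: "A \<in> trace_sets \<Omega> F \<theta> t"
        show "A \<in> (\<Inter>s\<in>{t<..}. trace_sets \<Omega> F \<theta> s)"
        proof (rule INT_I)
          fix s assume "s \<in> {t<..}"
          then have "t \<le> s" by simp
          then show "A \<in> trace_sets \<Omega> F \<theta> s" by (rule trace_mono[OF F t _ A])
        qed
      qed
      show "(\<Inter>s\<in>{t<..}. trace_sets \<Omega> F \<theta> s) \<subseteq> trace_sets \<Omega> F \<theta> t"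
      proof (rule subsetI)
        fix A assume "A \<in> (\<Inter>s\<in>{t<..}. trace_sets \<Omega> F \<theta> s)"
        then have "\<And>s. t < s \<Longrightarrow> A \<in> trace_sets \<Omega> F \<theta> s" by simp
        then show "A \<in> trace_sets \<Omega> F \<theta> t" by (rule trace_rc[OF F rc t])
      qed
    qed
  qed
  have FH: "\<forall>s\<ge>0. sets (F s) \<subseteq> sets (H s)"
  proof (intro allI impI subsetI)
    fix s A assume s: "0 \<le> s" and A: "A \<in> sets (F s)"
    have "A \<subseteq> \<Omega>" using sets.sets_into_space[OF A] filt_space[OF F s] by simp
    then have "A \<in> trace_sets \<Omega> F \<theta> s"
      by (rule trace_setsI[where A'=A and F=F and t=s and \<theta>=\<theta> and \<Omega>=\<Omega>, OF _ A]) simp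
    then show "A \<in> sets (H s)" using sH[OF s] by simp
  qed
  have stH: "stopping_time H \<theta>"
  proof (rule stopping_timeI)
    fix t :: real
    show "Measurable.pred (H t) (\<lambda>x. \<theta> x \<le> t)"
      unfolding pred_def spH
    proof (cases "t < 0")
      case True
      then have "{x \<in> \<Omega>. \<theta> x \<le> t} = {}" using pos by force
      then show "{x \<in> \<Omega>. \<theta> x \<le> t} \<in> sets (H t)" by (metis sets.empty_sets)
    next
      case False
      have "{x \<in> \<Omega>. \<theta> x \<le> t} \<in> trace_sets \<Omega> F \<theta> t"
        by (rule trace_setsI[where A'="{}" and F=F and t=t and \<theta>=\<theta> and \<Omega>=\<Omega>]) auto
      then show "{x \<in> \<Omega>. \<theta> x \<le> t} \<in> sets (H t)" using sH False by simp
    qed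
  qed
  let ?X = "\<Inter>{sets (H' t) | H'. filtration_on \<Omega> H' \<and> right_continuous_filtration H' \<and>
          (\<forall>s\<ge>0. sets (F s) \<subseteq> sets (H' s)) \<and> stopping_time H' \<theta>}"
  have "sets (H t) \<in> {sets (H' t) | H'. filtration_on \<Omega> H' \<and> right_continuous_filtration H' \<and>
          (\<forall>s\<ge>0. sets (F s) \<subseteq> sets (H' s)) \<and> stopping_time H' \<theta>}"
    by (rule CollectI, rule exI[of _ H]) (use filt rcH FH stH in simp)
  then have "?X \<subseteq> sets (H t)" by (rule Inter_lower)
  then have Xs: "?X \<subseteq> trace_sets \<Omega> F \<theta> t" using sH[OF t] by simp
  then have XP: "?X \<subseteq> Pow \<Omega>" using Pw by blast
  have "sets (prog_enlargement \<Omega> F \<theta> t) = sigma_sets \<Omega> ?X"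
    unfolding prog_enlargement_def by (rule sets_measure_of[OF XP])
  also have "\<dots> \<subseteq> trace_sets \<Omega> F \<theta> t"
    by (rule sigma_algebra.sigma_sets_subset[OF trace_sigma[OF F t] Xs])
  finally show ?thesis .
qed


lemma part1:
  assumes F: "filtration_on \<Omega> F" and rc: "right_continuous_filtration F"
    and pos: "\<forall>\<omega>\<in>\<Omega>. 0 < \<theta> \<omega>" and T: "0 \<le> T"
    and st: "stopping_time (prog_enlargement \<Omega> F \<theta>) \<tau>"
    and tb: "\<forall>\<omega>\<in>\<Omega>. \<tau> \<omega> \<in> {0..T}"
  shows "\<exists>\<sigma>. stopping_time F \<sigma> \<and> (\<forall>\<omega>\<in>\<Omega>. \<sigma> \<omega> \<in> {0..T}) \<and>
           (\<forall>\<omega>\<in>\<Omega>. min (\<sigma> \<omega>) (\<theta> \<omega>) = min (\<tau> \<omega>) (\<theta> \<omega>))"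
proof -
  define D where "D = (\<rat> \<inter> {0..T}) \<union> {T}"
  have D: "\<And>q. q \<in> D \<Longrightarrow> 0 \<le> q \<and> q \<le> T" "T \<in> D" "countable D"
    using T countable_rat unfolding D_def by auto
  have ex: "\<exists>B. B \<in> sets (F q) \<and> (\<forall>x\<in>{\<omega>\<in>\<Omega>. q < \<theta> \<omega>}. x \<in> {\<omega>\<in>\<Omega>. \<tau> \<omega> \<le> q} \<longleftrightarrow> x \<in> B)"
    if q: "q \<in> D" for q
  proof -
    have q0: "0 \<le> q" using D(1)[OF q] by simp
    have "space (prog_enlargement \<Omega> F \<theta> q) = \<Omega>"
      unfolding prog_enlargement_def by (simp add: space_measure_of_conv)
    then have "{\<omega>\<in>\<Omega>. \<tau> \<omega> \<le> q} \<in> sets (prog_enlargement \<Omega> F \<theta> q)"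
      using stopping_timeD[OF st, of q] by (simp add: pred_def)
    then have "{\<omega>\<in>\<Omega>. \<tau> \<omega> \<le> q} \<in> trace_sets \<Omega> F \<theta> q"
      using G_sub[OF F rc pos q0] by blast
    then obtain B where "B \<in> sets (F q)" "\<forall>x\<in>{\<omega>\<in>\<Omega>. q < \<theta> \<omega>}. x \<in> {\<omega>\<in>\<Omega>. \<tau> \<omega> \<le> q} \<longleftrightarrow> x \<in> B"
      by (rule trace_setsE)
    then show ?thesis by blast
  qed
  then have "\<forall>q\<in>D. \<exists>B. B \<in> sets (F q) \<and> (\<forall>x\<in>{\<omega>\<in>\<Omega>. q < \<theta> \<omega>}. x \<in> {\<omega>\<in>\<Omega>. \<tau> \<omega> \<le> q} \<longleftrightarrow> x \<in> B)"
    by blast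
  from bchoice[OF this] obtain A where
    A: "\<forall>q\<in>D. A q \<in> sets (F q) \<and> (\<forall>x\<in>{\<omega>\<in>\<Omega>. q < \<theta> \<omega>}. x \<in> {\<omega>\<in>\<Omega>. \<tau> \<omega> \<le> q} \<longleftrightarrow> x \<in> A q)"
    by blast
  have AF: "A q \<in> sets (F q)" if "q \<in> D" for q using A that by blast
  have AO: "A q \<subseteq> \<Omega>" if "q \<in> D" for q
    using sets.sets_into_space[OF AF[OF that]] filt_space[OF F] D(1)[OF that] by simp
  have key: "\<omega> \<in> A q \<longleftrightarrow> \<tau> \<omega> \<le> q" if "q \<in> D" "\<omega> \<in> \<Omega>" "q < \<theta> \<omega>" for q \<omega>
  proof -
    have "\<omega> \<in> {\<omega>\<in>\<Omega>. q < \<theta> \<omega>}" using that by simp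
    then show ?thesis using A that(1,2) by blast
  qed
  define S where "S \<omega> = {q\<in>D. \<omega> \<in> A q}" for \<omega>
  define \<sigma> where "\<sigma> \<omega> = (if S \<omega> = {} then T else Inf (S \<omega>))" for \<omega>
  have bdd: "bdd_below (S \<omega>)" for \<omega>
    unfolding S_def using D(1) by (intro bdd_belowI[of _ 0]) auto
  have sig_range: "0 \<le> \<sigma> \<omega> \<and> \<sigma> \<omega> \<le> T" for \<omega>
  proof (cases "S \<omega> = {}")
    case True then show ?thesis using T by (simp add: \<sigma>_def)
  next
    case False
    then obtain q where q: "q \<in> S \<omega>" by blast
    have "Inf (S \<omega>) \<le> q" by (rule cInf_lower[OF q bdd])
    moreover have "q \<le> T" using q D(1) by (auto simp: S_def)
    moreover have "0 \<le> Inf (S \<omega>)" using False D(1) by (intro cInf_greatest) (auto simp: S_def)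
    ultimately show ?thesis using False by (simp add: \<sigma>_def)
  qed
  have less_set: "{\<omega>\<in>\<Omega>. \<sigma> \<omega> < t} \<in> sets (F t)" if t: "0 \<le> t" for t
  proof (cases "T < t")
    case True
    then have lt: "\<sigma> \<omega> < t" for \<omega> using sig_range[of \<omega>] by linarith
    have "{\<omega>\<in>\<Omega>. \<sigma> \<omega> < t} = space (F t)"
      using lt filt_space[OF F t] by auto
    then show ?thesis by simp
  next
    case False
    have eq: "{\<omega>\<in>\<Omega>. \<sigma> \<omega> < t} = (\<Union>q\<in>D \<inter> {..<t}. A q)"
    proof (rule set_eqI, rule iffI)
      fix \<omega> assume w: "\<omega> \<in> {\<omega>\<in>\<Omega>. \<sigma> \<omega> < t}"
      have ne: "S \<omega> \<noteq> {}"
      proof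
        assume "S \<omega> = {}"
        then have "\<sigma> \<omega> = T" by (simp add: \<sigma>_def)
        then show False using w False by simp
      qed
      then have "Inf (S \<omega>) < t" using w by (simp add: \<sigma>_def)
      then obtain q where "q \<in> S \<omega>" "q < t" using cInf_less_iff[OF ne bdd] by blast
      then show "\<omega> \<in> (\<Union>q\<in>D \<inter> {..<t}. A q)" by (auto simp: S_def)
    next
      fix \<omega> assume "\<omega> \<in> (\<Union>q\<in>D \<inter> {..<t}. A q)"
      then obtain q where q: "q \<in> D" "q < t" "\<omega> \<in> A q" by blast
      then have qS: "q \<in> S \<omega>" by (simp add: S_def)
      then have ne: "S \<omega> \<noteq> {}" by blast
      have "Inf (S \<omega>) \<le> q" by (rule cInf_lower[OF qS bdd])
      then have "\<sigma> \<omega> < t" using ne q by (simp add: \<sigma>_def)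
      moreover have "\<omega> \<in> \<Omega>" using AO[OF q(1)] q(3) by blast
      ultimately show "\<omega> \<in> {\<omega>\<in>\<Omega>. \<sigma> \<omega> < t}" by simp
    qed
    have "(\<Union>q\<in>D \<inter> {..<t}. A q) \<in> sets (F t)"
    proof (rule sets.countable_UN')
      show "countable (D \<inter> {..<t})" using D(3) by simp
      show "A ` (D \<inter> {..<t}) \<subseteq> sets (F t)"
      proof (rule image_subsetI)
        fix q assume "q \<in> D \<inter> {..<t}"
        then have q: "q \<in> D" "q < t" by auto
        have "0 \<le> q" "q \<le> t" using D(1)[OF q(1)] q(2) by auto
        then show "A q \<in> sets (F t)" using filt_mono[OF F _ _ AF[OF q(1)]] by blast
      qed
    qed
    then show ?thesis using eq by simp
  qed
  have le_set: "{\<omega>\<in>\<Omega>. \<sigma> \<omega> \<le> t} \<in> sets (F t)" if t: "0 \<le> t" for t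
  proof -
    have "{\<omega>\<in>\<Omega>. \<sigma> \<omega> \<le> t} \<in> sets (F s)" if s: "t < s" for s
    proof -
      let ?u = "\<lambda>n::nat. t + (s - t) / (real n + 1)"
      have eq: "{\<omega>\<in>\<Omega>. \<sigma> \<omega> \<le> t} = (\<Inter>n. {\<omega>\<in>\<Omega>. \<sigma> \<omega> < ?u n})"
      proof (rule set_eqI, rule iffI)
        fix \<omega> assume w: "\<omega> \<in> {\<omega>\<in>\<Omega>. \<sigma> \<omega> \<le> t}"
        have "\<sigma> \<omega> < ?u n" for n
        proof -
          have "0 < (s - t) / (real n + 1)" using s by simp
          then show ?thesis using w by simp
        qed
        then show "\<omega> \<in> (\<Inter>n. {\<omega>\<in>\<Omega>. \<sigma> \<omega> < ?u n})" using w by simp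
      next
        fix \<omega> assume w: "\<omega> \<in> (\<Inter>n. {\<omega>\<in>\<Omega>. \<sigma> \<omega> < ?u n})"
        have "\<sigma> \<omega> \<le> t"
        proof (rule ccontr)
          assume "\<not> \<sigma> \<omega> \<le> t"
          then have d: "0 < \<sigma> \<omega> - t" by simp
          obtain n :: nat where n: "(s - t) / (\<sigma> \<omega> - t) < real n" using reals_Archimedean2 by blast
          have "s - t < real n * (\<sigma> \<omega> - t)" using n d by (simp add: field_simps)
          also have "\<dots> \<le> (real n + 1) * (\<sigma> \<omega> - t)" using d by (intro mult_right_mono) auto
          finally have "(s - t) / (real n + 1) < \<sigma> \<omega> - t" by (simp add: field_simps)
          moreover have "\<sigma> \<omega> < ?u n" using w by blast
          ultimately show False by simp
        qed
        then show "\<omega> \<in> {\<omega>\<in>\<Omega>. \<sigma> \<omega> \<le> t}" using w by blast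
      qed
      have "{\<omega>\<in>\<Omega>. \<sigma> \<omega> < ?u n} \<in> sets (F s)" for n
      proof -
        have a: "0 \<le> (s - t) / (real n + 1)" using s by simp
        have "(s - t) / (real n + 1) \<le> (s - t) / 1" using s by (intro divide_left_mono) auto
        then have b: "(s - t) / (real n + 1) \<le> s - t" by simp
        have "0 \<le> ?u n" "?u n \<le> s" using a b t by auto
        then show ?thesis using less_set filt_mono[OF F] by blast
      qed
      then show ?thesis unfolding eq by (intro sets.countable_INT) auto
    qed
    then have "{\<omega>\<in>\<Omega>. \<sigma> \<omega> \<le> t} \<in> (\<Inter>s\<in>{t<..}. sets (F s))" by simp
    moreover have "sets (F t) = (\<Inter>s\<in>{t<..}. sets (F s))"
      using rc t unfolding right_continuous_filtration_def by blast
    ultimately show ?thesis by simp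
  qed
  have st_sigma: "stopping_time F \<sigma>"
  proof (rule stopping_timeI)
    fix t :: real
    show "Measurable.pred (F t) (\<lambda>x. \<sigma> x \<le> t)"
      unfolding pred_def
    proof (cases "t < 0")
      case True
      then have "\<not> \<sigma> x \<le> t" for x using sig_range[of x] by linarith
      then have "{x \<in> space (F t). \<sigma> x \<le> t} = {}" by auto
      then show "{x \<in> space (F t). \<sigma> x \<le> t} \<in> sets (F t)" by (metis sets.empty_sets)
    next
      case False
      then show "{x \<in> space (F t). \<sigma> x \<le> t} \<in> sets (F t)"
        using le_set[of t] filt_space[OF F, of t] by simp
    qed
  qed
  have eqmin: "min (\<sigma> \<omega>) (\<theta> \<omega>) = min (\<tau> \<omega>) (\<theta> \<omega>)" if w: "\<omega> \<in> \<Omega>" for \<omega>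
  proof (cases "\<tau> \<omega> < \<theta> \<omega>")
    case True
    have lb: "\<tau> \<omega> \<le> q" if "q \<in> S \<omega>" for q
    proof (cases "q < \<theta> \<omega>")
      case True
      then show ?thesis using key[of q \<omega>] that w by (simp add: S_def)
    next
      case False
      then show ?thesis using \<open>\<tau> \<omega> < \<theta> \<omega>\<close> by simp
    qed
    have ub: "\<exists>q\<in>S \<omega>. q < \<tau> \<omega> + e" if e: "0 < e" for e
    proof (cases "\<tau> \<omega> < T")
      case True
      obtain q where q: "q \<in> \<rat>" "\<tau> \<omega> < q" "q < min (\<tau> \<omega> + e) (min (\<theta> \<omega>) T)"
        using Rats_dense_in_real[of "\<tau> \<omega>" "min (\<tau> \<omega> + e) (min (\<theta> \<omega>) T)"] True e \<open>\<tau> \<omega> < \<theta> \<omega>\<close> by auto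
      have qD: "q \<in> D" using q tb w unfolding D_def by auto
      have "\<omega> \<in> A q" using key[OF qD w] q by simp
      then have "q \<in> S \<omega>" using qD by (simp add: S_def)
      then show ?thesis using q by auto
    next
      case False
      then have "\<tau> \<omega> = T" using tb w by auto
      then have "\<omega> \<in> A T" using key[OF D(2) w] \<open>\<tau> \<omega> < \<theta> \<omega>\<close> by simp
      then have "T \<in> S \<omega>" using D(2) by (simp add: S_def)
      moreover have "T < \<tau> \<omega> + e" using \<open>\<tau> \<omega> = T\<close> e by simp
      ultimately show ?thesis by blast
    qed
    have ne: "S \<omega> \<noteq> {}" using ub[of 1] by auto
    have "Inf (S \<omega>) = \<tau> \<omega>"
    proof (rule antisym)
      show "\<tau> \<omega> \<le> Inf (S \<omega>)" using ne lb by (intro cInf_greatest) auto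
      show "Inf (S \<omega>) \<le> \<tau> \<omega>"
      proof (rule field_le_epsilon)
        fix e :: real assume "0 < e"
        then obtain q where "q \<in> S \<omega>" "q < \<tau> \<omega> + e" using ub by blast
        then show "Inf (S \<omega>) \<le> \<tau> \<omega> + e" using cInf_lower[OF _ bdd, of q \<omega>] by simp
      qed
    qed
    then have "\<sigma> \<omega> = \<tau> \<omega>" using ne by (simp add: \<sigma>_def)
    then show ?thesis by simp
  next
    case False
    have "\<theta> \<omega> \<le> \<sigma> \<omega>"
    proof (cases "S \<omega> = {}")
      case True
      have "\<tau> \<omega> \<le> T" using tb w by simp
      then show ?thesis using True False by (simp add: \<sigma>_def)
    next
      case ne: False
      have "\<theta> \<omega> \<le> q" if "q \<in> S \<omega>" for q
      proof (rule ccontr)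
        assume "\<not> \<theta> \<omega> \<le> q"
        then have "q < \<theta> \<omega>" by simp
        then have "\<tau> \<omega> \<le> q" using key[of q \<omega>] that w by (simp add: S_def)
        then show False using \<open>q < \<theta> \<omega>\<close> False by simp
      qed
      then have "\<theta> \<omega> \<le> Inf (S \<omega>)" using ne by (intro cInf_greatest) auto
      then show ?thesis using ne by (simp add: \<sigma>_def)
    qed
    then show ?thesis using False by simp
  qed
  show ?thesis using st_sigma sig_range eqmin by auto
qed


lemma payoff_min:
  assumes "min (\<sigma> \<omega>) (\<theta> \<omega>) = min (\<tau> \<omega>) (\<theta> \<omega>)"
  shows "payoff P R \<theta> (\<tau> \<omega>) \<omega> = payoff P R \<theta> (min (\<sigma> \<omega>) (\<theta> \<omega>)) \<omega> \<and>
         payoff P R \<theta> (min (\<sigma> \<omega>) (\<theta> \<omega>)) \<omega> = payoff P R \<theta> (\<sigma> \<omega>) \<omega>"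
  using assms by (auto simp: payoff_def min_def split: if_splits)

theorem lemma3p1:
  fixes M :: "'a measure" and F :: "real \<Rightarrow> 'a measure" and \<theta> :: "'a \<Rightarrow> real"
    and P R :: "real \<Rightarrow> 'a \<Rightarrow> real" and T :: real
  assumes "prob_space M"
    and "usual_conditions M F"
    and "\<theta> \<in> borel_measurable M" and "\<forall>\<omega>\<in>space M. 0 < \<theta> \<omega>"
    and "T > 0"
    and "optional_process (space M) F P" and "bounded_process (space M) P"
    and "optional_process (space M) F R" and "bounded_process (space M) R"
  shows "(\<forall>\<sigma>h. stopping_time (prog_enlargement (space M) F \<theta>) \<sigma>h \<and>
              (\<forall>\<omega>\<in>space M. \<sigma>h \<omega> \<in> {0..T}) \<longrightarrow>
            (\<exists>\<sigma>. stopping_time F \<sigma> \<and> (\<forall>\<omega>\<in>space M. \<sigma> \<omega> \<in> {0..T}) \<and>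
              (AE \<omega> in M. payoff P R \<theta> (\<sigma>h \<omega>) \<omega> = payoff P R \<theta> (min (\<sigma> \<omega>) (\<theta> \<omega>)) \<omega> \<and>
                           payoff P R \<theta> (min (\<sigma> \<omega>) (\<theta> \<omega>)) \<omega> = payoff P R \<theta> (\<sigma> \<omega>) \<omega>)))
       \<and> (\<forall>\<sigma>. stopping_time F \<sigma> \<and> (\<forall>\<omega>\<in>space M. \<sigma> \<omega> \<in> {0..T}) \<longrightarrow>
            (\<exists>x. optional_process (space M) (stopped_filtration (space M) F \<sigma>) x \<and>
              (AE \<omega> in M. payoff P R \<theta> (\<sigma> \<omega>) \<omega> = x (\<theta> \<omega>) \<omega>)))"
  proof -
  have F: "filtration_on (space M) F" and rc: "right_continuous_filtration F"
    using assms(2) by (auto simp: usual_conditions_def)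
  have T0: "0 \<le> T" using assms(5) by simp
  have I: "\<forall>\<sigma>h. stopping_time (prog_enlargement (space M) F \<theta>) \<sigma>h \<and>
              (\<forall>\<omega>\<in>space M. \<sigma>h \<omega> \<in> {0..T}) \<longrightarrow>
            (\<exists>\<sigma>. stopping_time F \<sigma> \<and> (\<forall>\<omega>\<in>space M. \<sigma> \<omega> \<in> {0..T}) \<and>
              (AE \<omega> in M. payoff P R \<theta> (\<sigma>h \<omega>) \<omega> = payoff P R \<theta> (min (\<sigma> \<omega>) (\<theta> \<omega>)) \<omega> \<and>
                           payoff P R \<theta> (min (\<sigma> \<omega>) (\<theta> \<omega>)) \<omega> = payoff P R \<theta> (\<sigma> \<omega>) \<omega>))"
  proof (intro allI impI)
    fix \<sigma>h assume h: "stopping_time (prog_enlargement (space M) F \<theta>) \<sigma>h \<and> (\<forall>\<omega>\<in>space M. \<sigma>h \<omega> \<in> {0..T})"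
    obtain \<sigma> where \<sigma>: "stopping_time F \<sigma>" "\<forall>\<omega>\<in>space M. \<sigma> \<omega> \<in> {0..T}"
      "\<forall>\<omega>\<in>space M. min (\<sigma> \<omega>) (\<theta> \<omega>) = min (\<sigma>h \<omega>) (\<theta> \<omega>)"
      using part1[OF F rc assms(4) T0 conjunct1[OF h] conjunct2[OF h]] by blast
    have "AE \<omega> in M. payoff P R \<theta> (\<sigma>h \<omega>) \<omega> = payoff P R \<theta> (min (\<sigma> \<omega>) (\<theta> \<omega>)) \<omega> \<and>
                      payoff P R \<theta> (min (\<sigma> \<omega>) (\<theta> \<omega>)) \<omega> = payoff P R \<theta> (\<sigma> \<omega>) \<omega>"
    proof (rule AE_I2)
      fix \<omega> assume "\<omega> \<in> space M"
      then have "min (\<sigma> \<omega>) (\<theta> \<omega>) = min (\<sigma>h \<omega>) (\<theta> \<omega>)" using \<sigma>(3) by blast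
      then show "payoff P R \<theta> (\<sigma>h \<omega>) \<omega> = payoff P R \<theta> (min (\<sigma> \<omega>) (\<theta> \<omega>)) \<omega> \<and>
                 payoff P R \<theta> (min (\<sigma> \<omega>) (\<theta> \<omega>)) \<omega> = payoff P R \<theta> (\<sigma> \<omega>) \<omega>"
        by (rule payoff_min)
    qed
    then show "\<exists>\<sigma>. stopping_time F \<sigma> \<and> (\<forall>\<omega>\<in>space M. \<sigma> \<omega> \<in> {0..T}) \<and>
              (AE \<omega> in M. payoff P R \<theta> (\<sigma>h \<omega>) \<omega> = payoff P R \<theta> (min (\<sigma> \<omega>) (\<theta> \<omega>)) \<omega> \<and>
                           payoff P R \<theta> (min (\<sigma> \<omega>) (\<theta> \<omega>)) \<omega> = payoff P R \<theta> (\<sigma> \<omega>) \<omega>)"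
      using \<sigma>(1,2) by blast
  qed
  have II: "\<forall>\<sigma>. stopping_time F \<sigma> \<and> (\<forall>\<omega>\<in>space M. \<sigma> \<omega> \<in> {0..T}) \<longrightarrow>
            (\<exists>x. optional_process (space M) (stopped_filtration (space M) F \<sigma>) x \<and>
              (AE \<omega> in M. payoff P R \<theta> (\<sigma> \<omega>) \<omega> = x (\<theta> \<omega>) \<omega>))"
  proof (intro allI impI)
    fix \<sigma> assume h: "stopping_time F \<sigma> \<and> (\<forall>\<omega>\<in>space M. \<sigma> \<omega> \<in> {0..T})"
    have sb: "\<forall>\<omega>\<in>space M. 0 \<le> \<sigma> \<omega> \<and> \<sigma> \<omega> \<le> T" using h by simp
    obtain x where x: "optional_process (space M) (stopped_filtration (space M) F \<sigma>) x"
      "\<forall>\<omega>\<in>space M. payoff P R \<theta> (\<sigma> \<omega>) \<omega> = x (\<theta> \<omega>) \<omega>"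
      using part2[OF F conjunct1[OF h] sb T0 assms(6) assms(8), of \<theta>] by blast
    have "AE \<omega> in M. payoff P R \<theta> (\<sigma> \<omega>) \<omega> = x (\<theta> \<omega>) \<omega>"
      using x(2) by (intro AE_I2) blast
    then show "\<exists>x. optional_process (space M) (stopped_filtration (space M) F \<sigma>) x \<and>
              (AE \<omega> in M. payoff P R \<theta> (\<sigma> \<omega>) \<omega> = x (\<theta> \<omega>) \<omega>)"
      using x(1) by blast
  qed
  show ?thesis using I II by blast
qed

end
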